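(* There are universal constants $c>0$ and $T_0$ such that for every $T \ge T_0$ there is a (randomized, adaptive) adversary strategy for the $T$-step sequential binary prediction game such that every forecasting algorithm incurs $\mathbb{E}[\mathsf{CalDist}(x,p)] \ge c\,T^{1/3}$, where $x$ is the sequence of outcomes and $p$ the sequence of predictions.
   Context: Sequential binary prediction game with horizon $T$: at each step $t \in [T]$, the adversary picks a bit $x_t \in \{0,1\}$ and simultaneously the forecaster picks a prediction $p_t \in [0,1]$; both may depend on all previous outcomes and predictions (and on their own randomness); then $x_t,p_t$ are revealed to both. For $x \in \{0,1\}^T$, let $\mathcal{C}(x) = \{q \in [0,1]^T : \sum_{t=1}^T (x_t - q_t)\mathbf{1}[q_t = \alpha] = 0 \text{ for all } \alpha \in [0,1]\}$, and $\mathsf{CalDist}(x,p) = \min_{q \in \mathcal{C}(x)} \|p - q\|_1$. The expectation is over the randomness of both players. *)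

theory Defs
  imports "HOL-Probability.Probability"
begin

text \<open>Sequences of length T are functions on nat, indexed by t < T (i.e. steps 0..T-1).
  Outcomes are bits (bool, with of_bool giving 0/1).\<close>

definition cal_set :: "nat \<Rightarrow> (nat \<Rightarrow> bool) \<Rightarrow> (nat \<Rightarrow> real) set" where
  "cal_set T x = {q. (\<forall>t<T. 0 \<le> q t \<and> q t \<le> 1) \<and>
      (\<forall>\<alpha>::real. (\<Sum>t<T. (of_bool (x t) - q t) * of_bool (q t = \<alpha>)) = 0)}"

definition CalDist :: "nat \<Rightarrow> (nat \<Rightarrow> bool) \<Rightarrow> (nat \<Rightarrow> real) \<Rightarrow> real" where
  "CalDist T x p = Inf {(\<Sum>t<T. \<bar>p t - q t\<bar>) | q. q \<in> cal_set T x}"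

text \<open>A history is the list of revealed pairs (x_s, p_s) for s < t.
  An adversary (behavioural randomized strategy) maps a history to the probability
  that the next bit is 1.  A deterministic forecaster maps a history to a prediction.
  A randomized forecaster is a family of deterministic forecasters indexed by a random
  seed (drawn once, independently of the adversary's coins).\<close>
type_synonym history = "(bool \<times> real) list"

fun play :: "(history \<Rightarrow> real) \<Rightarrow> (history \<Rightarrow> real) \<Rightarrow> nat \<Rightarrow> history pmf" where
  "play A F 0 = return_pmf []"
| "play A F (Suc n) = play A F n \<bind>
     (\<lambda>h. map_pmf (\<lambda>b. h @ [(b, F h)]) (bernoulli_pmf (A h)))"

definition expected_caldist :: "(history \<Rightarrow> real) \<Rightarrow> (history \<Rightarrow> real) \<Rightarrow> nat \<Rightarrow> real" where
  "expected_caldist A F T =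
     measure_pmf.expectation (play A F T)
       (\<lambda>h. CalDist T (\<lambda>t. fst (h ! t)) (\<lambda>t. snd (h ! t)))"

end

theory Submission
  imports Defs
begin


lemma expectation_bind_pmf_finite:
  fixes g :: "'b \<Rightarrow> real"
  assumes fN: "finite (set_pmf N)" and ff: "\<And>x. x \<in> set_pmf N \<Longrightarrow> finite (set_pmf (f x))"
  shows "measure_pmf.expectation (bind_pmf N f) g =
         measure_pmf.expectation N (\<lambda>x. measure_pmf.expectation (f x) g)"
proof -
  define S where "S = (\<Union>x\<in>set_pmf N. set_pmf (f x))"
  have fS: "finite S" using fN ff by (auto simp: S_def)
  have "measure_pmf.expectation (bind_pmf N f) g = (\<Sum>y\<in>S. g y * pmf (bind_pmf N f) y)"
    by (rule integral_measure_pmf_real) (use fS in \<open>auto simp: S_def\<close>)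
  also have "\<dots> = (\<Sum>y\<in>S. g y * (\<Sum>x\<in>set_pmf N. pmf (f x) y * pmf N x))"
    by (intro sum.cong refl arg_cong2[where f="(*)"], subst pmf_bind,
        rule integral_measure_pmf_real) (auto simp: fN)
  also have "\<dots> = (\<Sum>x\<in>set_pmf N. (\<Sum>y\<in>S. g y * pmf (f x) y) * pmf N x)"
    by (simp add: sum_distrib_left sum_distrib_right sum.swap[of _ S] mult.assoc mult.commute mult.left_commute)
  also have "\<dots> = measure_pmf.expectation N (\<lambda>x. measure_pmf.expectation (f x) g)"
  proof -
    have "measure_pmf.expectation N (\<lambda>x. measure_pmf.expectation (f x) g)
        = (\<Sum>x\<in>set_pmf N. measure_pmf.expectation (f x) g * pmf N x)"
      by (rule integral_measure_pmf_real[OF fN]) auto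
    also have "\<dots> = (\<Sum>x\<in>set_pmf N. (\<Sum>y\<in>S. g y * pmf (f x) y) * pmf N x)"
      by (intro sum.cong refl arg_cong2[where f="(*)"] integral_measure_pmf_real fS)
         (auto simp: S_def)
    finally show ?thesis by simp
  qed
  finally show ?thesis .
qed

lemma finite_set_pmf_bool: "finite (set_pmf (M :: bool pmf))"
  by (rule finite_subset[of _ UNIV]) auto

lemma finite_play: "finite (set_pmf (play A F n))"
  by (induction n) (auto simp: finite_set_pmf_bool)

lemma play_mart:
  fixes \<Phi> :: "history \<Rightarrow> real"
  assumes "\<And>h. measure_pmf.expectation (bernoulli_pmf (A h)) (\<lambda>b. \<Phi> (h @ [(b, F h)])) = \<Phi> h"
  shows "measure_pmf.expectation (play A F n) \<Phi> = \<Phi> []"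
proof (induction n)
  case 0 then show ?case by simp
next
  case (Suc n)
  have "measure_pmf.expectation (play A F (Suc n)) \<Phi> =
     measure_pmf.expectation (play A F n) (\<lambda>h. measure_pmf.expectation
        (map_pmf (\<lambda>b. h @ [(b, F h)]) (bernoulli_pmf (A h))) \<Phi>)"
    by (simp only: play.simps, rule expectation_bind_pmf_finite)
       (auto simp: finite_play finite_set_pmf_bool)
  also have "\<dots> = measure_pmf.expectation (play A F n) \<Phi>"
    using assms by simp
  finally show ?case using Suc by simp
qed

lemma play_support:
  assumes A01: "\<And>h. 0 \<le> A h \<and> A h \<le> 1"
  shows "h \<in> set_pmf (play A F n) \<Longrightarrow> length h = n \<and> (\<forall>i<n. snd (h!i) = F (take i h)) \<and>
     (\<forall>i<n. fst (h!i) \<longrightarrow> A (take i h) \<noteq> 0) \<and> (\<forall>i<n. \<not> fst (h!i) \<longrightarrow> A (take i h) \<noteq> 1)"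
proof (induction n arbitrary: h)
  case 0 then show ?case by simp
next
  case (Suc n)
  from Suc.prems obtain g b where g: "g \<in> set_pmf (play A F n)" and b: "b \<in> set_pmf (bernoulli_pmf (A g))"
    and h: "h = g @ [(b, F g)]" by auto
  have IH: "length g = n \<and> (\<forall>i<n. snd (g!i) = F (take i g)) \<and>
     (\<forall>i<n. fst (g!i) \<longrightarrow> A (take i g) \<noteq> 0) \<and> (\<forall>i<n. \<not> fst (g!i) \<longrightarrow> A (take i g) \<noteq> 1)"
    using Suc.IH[OF g] .
  have bT: "b \<Longrightarrow> A g \<noteq> 0" using b A01[of g] by (auto simp: set_pmf_iff)
  have bF: "\<not> b \<Longrightarrow> A g \<noteq> 1" using b A01[of g] by (auto simp: set_pmf_iff)
  show ?case
  proof (intro conjI allI impI)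
    show "length h = Suc n" using IH h by simp
  next
    fix i assume "i < Suc n"
    then consider "i < n" | "i = n" by linarith
    then show "snd (h!i) = F (take i h)"
      by cases (use IH h in \<open>auto simp: nth_append\<close>)
  next
    fix i assume "i < Suc n" "fst (h!i)"
    then consider "i < n" | "i = n" by linarith
    then show "A (take i h) \<noteq> 0"
      by cases (use IH h bT \<open>fst (h!i)\<close> in \<open>auto simp: nth_append\<close>)
  next
    fix i assume "i < Suc n" "\<not> fst (h!i)"
    then consider "i < n" | "i = n" by linarith
    then show "A (take i h) \<noteq> 1"
      by cases (use IH h bF \<open>\<not> fst (h!i)\<close> in \<open>auto simp: nth_append\<close>)
  qed
qed



lemma cal_sum_zero:
  assumes q: "q \<in> cal_set T x"
  shows "(\<Sum>t<T. (of_bool (x t) - q t) * f (q t)) = 0"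
proof -
  define Q where "Q = q ` {..<T}"
  have fQ: "finite Q" by (simp add: Q_def)
  have cal: "\<And>\<alpha>. (\<Sum>t<T. (of_bool (x t) - q t) * of_bool (q t = \<alpha>)) = 0"
    using q by (simp add: cal_set_def)
  have "(\<Sum>t<T. (of_bool (x t) - q t) * f (q t)) =
        (\<Sum>t<T. \<Sum>\<alpha>\<in>Q. (of_bool (x t) - q t) * of_bool (q t = \<alpha>) * f \<alpha>)"
  proof (rule sum.cong[OF refl])
    fix t assume "t \<in> {..<T}"
    then have tQ: "q t \<in> Q" by (simp add: Q_def)
    have "(\<Sum>\<alpha>\<in>Q. (of_bool (x t) - q t) * of_bool (q t = \<alpha>) * f \<alpha>) =
          (\<Sum>\<alpha>\<in>Q. if \<alpha> = q t then (of_bool (x t) - q t) * f \<alpha> else 0)"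
      by (intro sum.cong refl) auto
    also have "\<dots> = (of_bool (x t) - q t) * f (q t)"
      using tQ fQ by (simp add: sum.delta)
    finally show "(of_bool (x t) - q t) * f (q t) =
          (\<Sum>\<alpha>\<in>Q. (of_bool (x t) - q t) * of_bool (q t = \<alpha>) * f \<alpha>)" by simp
  qed
  also have "\<dots> = (\<Sum>\<alpha>\<in>Q. f \<alpha> * (\<Sum>t<T. (of_bool (x t) - q t) * of_bool (q t = \<alpha>)))"
    by (subst sum.swap) (simp only: sum_distrib_left mult.commute mult.left_commute mult.assoc)
  also have "\<dots> = 0" using cal by simp
  finally show ?thesis .
qed

lemma caldist_ge:
  assumes "\<And>q. q \<in> cal_set T x \<Longrightarrow> B \<le> (\<Sum>t<T. \<bar>p t - q t\<bar>)"
  shows "B \<le> CalDist T x p"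
proof -
  have "(\<lambda>t. of_bool (x t)) \<in> cal_set T x" by (simp add: cal_set_def)
  then have ne: "{(\<Sum>t<T. \<bar>p t - q t\<bar>) | q. q \<in> cal_set T x} \<noteq> {}" by blast
  show ?thesis unfolding CalDist_def
    by (rule cInf_greatest[OF ne]) (use assms in auto)
qed

lemma caldist_ge_S: "\<bar>\<Sum>t<T. of_bool (x t) - p t\<bar> \<le> CalDist T x p"
proof (rule caldist_ge)
  fix q assume q: "q \<in> cal_set T x"
  have z: "(\<Sum>t<T. (of_bool (x t) - q t) * 1) = 0" by (rule cal_sum_zero[OF q])
  have "(\<Sum>t<T. of_bool (x t) - p t) = (\<Sum>t<T. (of_bool (x t) - q t) * 1) + (\<Sum>t<T. q t - p t)"
    by (simp add: sum.distrib[symmetric])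
  also have "\<dots> = (\<Sum>t<T. q t - p t)" using z by simp
  finally have "\<bar>\<Sum>t<T. of_bool (x t) - p t\<bar> = \<bar>\<Sum>t<T. q t - p t\<bar>" by simp
  also have "\<dots> \<le> (\<Sum>t<T. \<bar>q t - p t\<bar>)" by (rule sum_abs)
  also have "\<dots> = (\<Sum>t<T. \<bar>p t - q t\<bar>)" by (simp add: abs_minus_commute)
  finally show "\<bar>\<Sum>t<T. of_bool (x t) - p t\<bar> \<le> (\<Sum>t<T. \<bar>p t - q t\<bar>)" .
qed

lemma aux3: "(c::real) \<le> d * (3/2) \<Longrightarrow> d = e \<Longrightarrow> a = b + c \<Longrightarrow> a \<le> b + 3/2 * e"
  by linarith

lemma caldist_ge_Z:
  assumes p01: "\<And>t. t < T \<Longrightarrow> 0 \<le> p t \<and> p t \<le> 1"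
  shows "(2/3) * (\<Sum>t<T. (1/2 - p t) * (of_bool (x t) - p t)) \<le> CalDist T x p"
proof (rule caldist_ge)
  fix q assume q: "q \<in> cal_set T x"
  have q01: "\<And>t. t < T \<Longrightarrow> 0 \<le> q t \<and> q t \<le> 1" using q by (simp add: cal_set_def)
  have z: "(\<Sum>t<T. (of_bool (x t) - q t) * (1/2 - q t)) = 0" by (rule cal_sum_zero[OF q])
  have pt: "(1/2 - p t) * (of_bool (x t) - p t) \<le> (of_bool (x t) - q t) * (1/2 - q t) + (3/2) * \<bar>p t - q t\<bar>"
    if "t < T" for t
  proof -
    have e: "(1/2 - p t) * (of_bool (x t) - p t) = (of_bool (x t) - q t) * (1/2 - q t)
         + (q t - p t) * (1/2 + of_bool (x t) - q t - p t)"
      by (simp add: field_simps)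
    have b: "\<bar>1/2 + of_bool (x t) - q t - p t\<bar> \<le> 3/2"
      using p01[OF that] q01[OF that] by (cases "x t") (auto split: abs_split)
    have "(q t - p t) * (1/2 + of_bool (x t) - q t - p t) \<le> \<bar>q t - p t\<bar> * \<bar>1/2 + of_bool (x t) - q t - p t\<bar>"
      by (metis abs_ge_self abs_mult)
    also have "\<dots> \<le> \<bar>q t - p t\<bar> * (3/2)" by (rule mult_left_mono[OF b]) simp
    finally have "(q t - p t) * (1/2 + of_bool (x t) - q t - p t) \<le> \<bar>q t - p t\<bar> * (3/2)" .
    moreover have "\<bar>q t - p t\<bar> = \<bar>p t - q t\<bar>" by (rule abs_minus_commute)
    ultimately show ?thesis using e by (intro aux3)
  qed
  have "(\<Sum>t<T. (1/2 - p t) * (of_bool (x t) - p t)) \<le>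
        (\<Sum>t<T. (of_bool (x t) - q t) * (1/2 - q t) + (3/2) * \<bar>p t - q t\<bar>)"
    by (rule sum_mono) (use pt in auto)
  also have "\<dots> = (3/2) * (\<Sum>t<T. \<bar>p t - q t\<bar>)"
    using z by (simp add: sum.distrib sum_distrib_left)
  finally show "(2/3) * (\<Sum>t<T. (1/2 - p t) * (of_bool (x t) - p t)) \<le> (\<Sum>t<T. \<bar>p t - q t\<bar>)"
    by linarith
qed



definition xv :: "history \<Rightarrow> nat \<Rightarrow> real" where "xv h i = of_bool (fst (h!i))"
definition pv :: "history \<Rightarrow> nat \<Rightarrow> real" where "pv h i = snd (h!i)"
definition Ssum :: "history \<Rightarrow> nat \<Rightarrow> real" where "Ssum h s = (\<Sum>i<s. xv h i - pv h i)"
definition act :: "real \<Rightarrow> history \<Rightarrow> nat \<Rightarrow> bool" where "act K h s = (\<forall>j\<le>s. \<bar>Ssum h j\<bar> < K)"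
definition adv :: "real \<Rightarrow> history \<Rightarrow> real" where
  "adv K h = (if act K h (length h) then 1/2 else if 0 < Ssum h (length h) then 1 else 0)"
definition Ust :: "real \<Rightarrow> history \<Rightarrow> nat \<Rightarrow> real" where
  "Ust K h n = (\<Sum>s<n. of_bool (act K h s) * (xv h s - pv h s))"
definition Rs :: "real \<Rightarrow> history \<Rightarrow> nat \<Rightarrow> real" where
  "Rs K h n = (\<Sum>s<n. of_bool (act K h s) * (1/4 + 2 * Ust K h s * (1/2 - pv h s) + (1/2 - pv h s)^2))"
definition Ns :: "real \<Rightarrow> history \<Rightarrow> nat \<Rightarrow> real" where
  "Ns K h n = (\<Sum>s<n. of_bool (act K h s) * ((1/2 - pv h s) * (xv h s - 1/2)))"
definition Vs :: "real \<Rightarrow> history \<Rightarrow> nat \<Rightarrow> real" where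
  "Vs K h n = (\<Sum>s<n. of_bool (act K h s) * (1/2 - pv h s)^2)"

lemma adv01: "0 \<le> adv K h \<and> adv K h \<le> 1" by (simp add: adv_def)

lemma xv_app: "i < length h \<Longrightarrow> xv (h @ y) i = xv h i" by (simp add: xv_def nth_append)
lemma pv_app: "i < length h \<Longrightarrow> pv (h @ y) i = pv h i" by (simp add: pv_def nth_append)
lemma xv_last: "xv (h @ [(b,p)]) (length h) = of_bool b" by (simp add: xv_def)
lemma pv_last: "pv (h @ [(b,p)]) (length h) = p" by (simp add: pv_def)

lemma Ssum_app: "s \<le> length h \<Longrightarrow> Ssum (h @ y) s = Ssum h s"
  unfolding Ssum_def by (intro sum.cong refl) (auto simp: xv_app pv_app)
lemma act_app: "s \<le> length h \<Longrightarrow> act K (h @ y) s = act K h s"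
  unfolding act_def by (auto simp: Ssum_app)
lemma Ust_app: "n \<le> length h \<Longrightarrow> Ust K (h @ y) n = Ust K h n"
  unfolding Ust_def by (intro sum.cong refl) (auto simp: xv_app pv_app act_app)

lemma Ssum_Suc: "Ssum h (Suc s) = Ssum h s + (xv h s - pv h s)" by (simp add: Ssum_def)
lemma Ust_Suc: "Ust K h (Suc s) = Ust K h s + of_bool (act K h s) * (xv h s - pv h s)" by (simp add: Ust_def)

lemma Ns_step: "Ns K (h @ [(b,p)]) (Suc (length h)) = Ns K h (length h) +
   of_bool (act K h (length h)) * ((1/2 - p) * (of_bool b - 1/2))"
proof -
  have "Ns K (h @ [(b,p)]) (length h) = Ns K h (length h)"
    unfolding Ns_def by (intro sum.cong refl) (auto simp: xv_app pv_app act_app)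
  then show ?thesis by (simp add: Ns_def act_app xv_last pv_last)
qed

lemma Rs_step: "Rs K (h @ [(b,p)]) (Suc (length h)) = Rs K h (length h) +
   of_bool (act K h (length h)) * (1/4 + 2 * Ust K h (length h) * (1/2 - p) + (1/2 - p)^2)"
proof -
  have "Rs K (h @ [(b,p)]) (length h) = Rs K h (length h)"
    unfolding Rs_def by (intro sum.cong refl) (auto simp: xv_app pv_app act_app Ust_app)
  then show ?thesis by (simp add: Rs_def act_app xv_last pv_last Ust_app)
qed

lemma Ust_step: "Ust K (h @ [(b,p)]) (Suc (length h)) = Ust K h (length h) +
   of_bool (act K h (length h)) * (of_bool b - p)"
  by (simp add: Ust_Suc Ust_app act_app xv_last pv_last)

lemma mart_N: "measure_pmf.expectation (play (adv K) F n) (\<lambda>h. Ns K h (length h)) = 0"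
proof -
  have "measure_pmf.expectation (play (adv K) F n) (\<lambda>h. Ns K h (length h)) = (\<lambda>h. Ns K h (length h)) []"
  proof (rule play_mart)
    fix h
    show "measure_pmf.expectation (bernoulli_pmf (adv K h))
          (\<lambda>b. Ns K (h @ [(b, F h)]) (length (h @ [(b, F h)]))) = Ns K h (length h)"
      using adv01[of K h]
      by (cases "act K h (length h)") (auto simp: Ns_step adv_def algebra_simps)
  qed
  then show ?thesis by (simp add: Ns_def)
qed

lemma mart_UR: "measure_pmf.expectation (play (adv K) F n)
    (\<lambda>h. (Ust K h (length h))^2 - Rs K h (length h)) = 0"
proof -
  have "measure_pmf.expectation (play (adv K) F n) (\<lambda>h. (Ust K h (length h))^2 - Rs K h (length h))
     = (\<lambda>h. (Ust K h (length h))^2 - Rs K h (length h)) []"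
  proof (rule play_mart)
    fix h
    show "measure_pmf.expectation (bernoulli_pmf (adv K h))
          (\<lambda>b. (Ust K (h @ [(b, F h)]) (length (h @ [(b, F h)])))^2 - Rs K (h @ [(b, F h)]) (length (h @ [(b, F h)])))
        = (Ust K h (length h))^2 - Rs K h (length h)"
      using adv01[of K h]
      by (cases "act K h (length h)") (auto simp: Ust_step Rs_step adv_def algebra_simps power2_eq_square)
  qed
  then show ?thesis by (simp add: Ust_def Rs_def)
qed



definition Inact :: "real \<Rightarrow> history \<Rightarrow> nat \<Rightarrow> real" where
  "Inact K h n = (\<Sum>s<n. of_bool (\<not> act K h s) * \<bar>xv h s - pv h s\<bar>)"

lemma lin_aux: "0 \<le> (e::real) \<Longrightarrow> a = e - f/2 \<Longrightarrow> c = f \<Longrightarrow> -(c/2) \<le> a" by linarith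

lemma act_mono: "act K h n \<Longrightarrow> m \<le> n \<Longrightarrow> act K h m"
  by (auto simp: act_def)

lemma Ust_act: "act K h n \<Longrightarrow> Ust K h n = Ssum h n"
proof (induction n)
  case 0 then show ?case by (simp add: Ust_def Ssum_def)
next
  case (Suc n)
  have "act K h n" using act_mono[OF Suc.prems] by simp
  then show ?case using Suc.IH by (simp add: Ust_Suc Ssum_Suc)
qed

lemma xv01: "xv h i = 0 \<or> xv h i = 1" by (simp add: xv_def)

locale goodh =
  fixes K :: real and h :: history and T :: nat
  assumes Kpos: "0 < K"
  and hp: "\<And>i. i < T \<Longrightarrow> 0 \<le> pv h i \<and> pv h i \<le> 1"
  and hx: "\<And>i. i < T \<Longrightarrow> \<not> act K h i \<Longrightarrow> (0 < Ssum h i \<longrightarrow> xv h i = 1) \<and> (\<not> 0 < Ssum h i \<longrightarrow> xv h i = 0)"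
begin

lemma xp_le1: "i < T \<Longrightarrow> \<bar>xv h i - pv h i\<bar> \<le> 1"
  using hp[of i] xv01[of h i] by auto

lemma Ust_bound: "n \<le> T \<Longrightarrow> \<bar>Ust K h n\<bar> \<le> K + 1"
proof (induction n)
  case 0 then show ?case using Kpos by (simp add: Ust_def)
next
  case (Suc n)
  show ?case
  proof (cases "act K h n")
    case True
    then have "Ust K h (Suc n) = Ssum h n + (xv h n - pv h n)" by (simp add: Ust_Suc Ust_act)
    moreover have "\<bar>Ssum h n\<bar> < K" using True by (simp add: act_def)
    moreover have "\<bar>xv h n - pv h n\<bar> \<le> 1" using Suc.prems xp_le1 by simp
    ultimately show ?thesis by linarith
  next
    case False
    then show ?thesis using Suc by (simp add: Ust_Suc)
  qed
qed

lemma Inact_stop: "n \<le> T \<Longrightarrow> \<not> act K h n \<Longrightarrow> K \<le> \<bar>Ssum h n\<bar> \<and> Inact K h n = \<bar>Ssum h n\<bar> - \<bar>Ust K h n\<bar>"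
proof (induction n)
  case 0 then show ?case using Kpos by (simp add: act_def Ssum_def)
next
  case (Suc n)
  have IS: "Inact K h (Suc n) = Inact K h n + of_bool (\<not> act K h n) * \<bar>xv h n - pv h n\<bar>"
    by (simp add: Inact_def)
  show ?case
  proof (cases "act K h n")
    case True
    have I0: "Inact K h n = 0" unfolding Inact_def
      by (rule sum.neutral) (use True act_mono in auto)
    have U: "Ust K h (Suc n) = Ssum h (Suc n)" using True by (simp add: Ust_Suc Ust_act Ssum_Suc)
    have "K \<le> \<bar>Ssum h (Suc n)\<bar>"
    proof (rule ccontr)
      assume "\<not> K \<le> \<bar>Ssum h (Suc n)\<bar>"
      then have "act K h (Suc n)" using True by (auto simp: act_def le_Suc_eq)
      then show False using Suc.prems by simp
    qed
    then show ?thesis using IS I0 U True by simp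
  next
    case False
    have IH: "K \<le> \<bar>Ssum h n\<bar>" "Inact K h n = \<bar>Ssum h n\<bar> - \<bar>Ust K h n\<bar>"
      using Suc False by auto
    have U: "Ust K h (Suc n) = Ust K h n" using False by (simp add: Ust_Suc)
    have n: "n < T" using Suc.prems by simp
    have p: "0 \<le> pv h n" "pv h n \<le> 1" using hp[OF n] by auto
    have abs: "\<bar>Ssum h (Suc n)\<bar> = \<bar>Ssum h n\<bar> + \<bar>xv h n - pv h n\<bar>"
    proof (cases "0 < Ssum h n")
      case True
      then have "xv h n = 1" using hx[OF n False] by simp
      then show ?thesis using True p by (simp add: Ssum_Suc)
    next
      case F2: False
      then have "xv h n = 0" using hx[OF n False] by simp
      moreover have "Ssum h n < 0" using F2 IH(1) Kpos by linarith
      ultimately show ?thesis using p by (simp add: Ssum_Suc)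
    qed
    have "0 \<le> \<bar>xv h n - pv h n\<bar>" by simp
    then show ?thesis using IS IH U abs False by (simp, linarith)
  qed
qed

lemma Inact_le: "Inact K h T \<le> \<bar>Ssum h T\<bar>"
proof (cases "act K h T")
  case True
  have "Inact K h T = 0" unfolding Inact_def
    by (rule sum.neutral) (use True act_mono in auto)
  then show ?thesis by simp
next
  case False
  then show ?thesis using Inact_stop[of T] by simp
qed

lemma stop_S: "\<not> act K h T \<Longrightarrow> K \<le> \<bar>Ssum h T\<bar>"
  using Inact_stop[of T] by simp

lemma Z_ge: "Vs K h T + Ns K h T - Inact K h T / 2 \<le> (\<Sum>s<T. (1/2 - pv h s) * (xv h s - pv h s))"
proof -
  have "Vs K h T + Ns K h T - Inact K h T / 2 =
    (\<Sum>s<T. of_bool (act K h s) * (1/2 - pv h s)^2 + of_bool (act K h s) * ((1/2 - pv h s) * (xv h s - 1/2))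
        - of_bool (\<not> act K h s) * \<bar>xv h s - pv h s\<bar> / 2)"
    unfolding Vs_def Ns_def Inact_def by (simp only: sum.distrib sum_subtractf sum_divide_distrib)
  also have "\<dots> \<le> (\<Sum>s<T. (1/2 - pv h s) * (xv h s - pv h s))"
  proof (rule sum_mono)
    fix s assume "s \<in> {..<T}"
    then have p: "0 \<le> pv h s" "pv h s \<le> 1" using hp by auto
    show "of_bool (act K h s) * (1/2 - pv h s)^2 + of_bool (act K h s) * ((1/2 - pv h s) * (xv h s - 1/2))
        - of_bool (\<not> act K h s) * \<bar>xv h s - pv h s\<bar> / 2 \<le> (1/2 - pv h s) * (xv h s - pv h s)"
    proof (cases "act K h s")
      case True then show ?thesis by (simp add: power2_eq_square algebra_simps)
    next
      case False
      have "\<bar>1/2 - pv h s\<bar> \<le> 1/2" using p by (auto split: abs_split)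
      then have "- (\<bar>xv h s - pv h s\<bar> / 2) \<le> (1/2 - pv h s) * (xv h s - pv h s)"
      proof (cases "xv h s = 0")
        case True
        have "0 \<le> pv h s * pv h s" by simp
        moreover have "(1/2 - pv h s) * (xv h s - pv h s) = pv h s * pv h s - pv h s / 2"
          using True by (simp add: algebra_simps)
        moreover have "\<bar>xv h s - pv h s\<bar> = pv h s" using True p by simp
        ultimately show ?thesis by (intro lin_aux)
      next
        case False
        then have "xv h s = 1" using xv01[of h s] by simp
        moreover have "0 \<le> (1 - pv h s) * (1 - pv h s)" by simp
        moreover have "(1/2 - pv h s) * (xv h s - pv h s) = (1 - pv h s) * (1 - pv h s) - (1 - pv h s) / 2"
          using \<open>xv h s = 1\<close> by (simp add: algebra_simps)
        moreover have "\<bar>xv h s - pv h s\<bar> = 1 - pv h s" using \<open>xv h s = 1\<close> p by simp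
        ultimately show ?thesis by (intro lin_aux)
      qed
      then show ?thesis using False by simp
    qed
  qed
  finally show ?thesis .
qed

lemma R_ge: "real T * of_bool (act K h T) / 8 - 8 * K^2 * Vs K h T \<le> Rs K h T"
proof -
  have cnt: "real T * of_bool (act K h T) \<le> (\<Sum>s<T. of_bool (act K h s))"
  proof (cases "act K h T")
    case True
    then have "(\<Sum>s<T. of_bool (act K h s)::real) = (\<Sum>s<T. 1)"
      by (intro sum.cong refl) (use act_mono in auto)
    then show ?thesis using True by simp
  next
    case False then show ?thesis by (simp add: sum_nonneg)
  qed
  have "(\<Sum>s<T. of_bool (act K h s)) / 8 - 8 * K^2 * Vs K h T =
        (\<Sum>s<T. of_bool (act K h s) * (1/8 - 8 * K^2 * (1/2 - pv h s)^2))"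
  proof -
    have "(\<Sum>s<T. of_bool (act K h s) * (1/8 - 8 * K^2 * (1/2 - pv h s)^2)) =
          (\<Sum>s<T. of_bool (act K h s) / 8 - 8 * K^2 * (of_bool (act K h s) * (1/2 - pv h s)^2))"
      by (intro sum.cong refl) (simp add: algebra_simps)
    also have "\<dots> = (\<Sum>s<T. of_bool (act K h s)) / 8 - 8 * K^2 * Vs K h T"
      unfolding Vs_def by (simp only: sum_subtractf sum_divide_distrib sum_distrib_left)
    finally show ?thesis by simp
  qed
  also have "\<dots> \<le> Rs K h T" unfolding Rs_def
  proof (rule sum_mono)
    fix s assume "s \<in> {..<T}"
    show "of_bool (act K h s) * (1/8 - 8 * K^2 * (1/2 - pv h s)^2)
      \<le> of_bool (act K h s) * (1/4 + 2 * Ust K h s * (1/2 - pv h s) + (1/2 - pv h s)^2)"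
    proof (cases "act K h s")
      case True
      then have U: "\<bar>Ust K h s\<bar> < K" by (simp add: Ust_act act_def)
      define d where "d = 1/2 - pv h s"
      define u where "u = Ust K h s"
      have "-(2 * K * \<bar>d\<bar>) \<le> 2 * u * d"
      proof -
        have "\<bar>2 * u * d\<bar> = 2 * \<bar>u\<bar> * \<bar>d\<bar>" by (simp add: abs_mult)
        also have "\<dots> \<le> 2 * K * \<bar>d\<bar>" using U unfolding u_def
          by (intro mult_right_mono) auto
        finally show ?thesis by linarith
      qed
      moreover have "2 * K * \<bar>d\<bar> \<le> 8 * K^2 * d^2 + 1/8"
      proof -
        have "0 \<le> (8 * K * \<bar>d\<bar> - 1)^2" by simp
        moreover have "\<bar>d\<bar> * \<bar>d\<bar> = d * d" by (simp add: abs_mult_self_eq)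
        ultimately show ?thesis by (simp add: power2_eq_square algebra_simps)
      qed
      moreover have "0 \<le> d^2" by simp
      ultimately have "1/8 - 8 * K^2 * d^2 \<le> 1/4 + 2 * u * d + d^2"
        by linarith
      then show ?thesis using True unfolding d_def u_def by simp
    next
      case False then show ?thesis by simp
    qed
  qed
  finally show ?thesis using cnt by linarith
qed

end



lemma final_arith:
  fixes K e v \<alpha> T :: real
  assumes K: "128 \<le> K" and h1: "K * (1 - \<alpha>) \<le> e" and h2: "v \<le> 2 * e"
    and h3: "T * \<alpha> / 8 - 8 * (K * K) * v \<le> (K + 1) * (K + 1)" and hT: "T = K * K * K"
  shows "K / 512 \<le> e"
proof (rule ccontr)
  assume "\<not> K / 512 \<le> e"
  then have e: "e < K / 512" by simp
  have Kp: "0 < K" using K by simp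
  have "K * (1 - \<alpha>) < K * (1/512)" using h1 e by simp
  then have a: "511/512 < \<alpha>" using Kp by (simp add: mult_less_cancel_left_pos)
  have KK: "0 < K * K" using Kp by simp
  have f1: "(K * K) * v \<le> (K * K) * (2 * e)" using h2 KK by (intro mult_left_mono) auto
  have f2: "(K * K) * e < (K * K) * (K / 512)" using e KK by (intro mult_strict_left_mono) auto
  have f3: "(K * K * K) * (511/512) \<le> (K * K * K) * \<alpha>" using a Kp by (intro mult_left_mono) auto
  have f4: "(K * K) * 128 \<le> (K * K) * K" using K KK by (intro mult_left_mono) auto
  have f5: "K * 128 \<le> K * K" using K Kp by (intro mult_left_mono) auto
  have h3': "(K * K * K) * \<alpha> / 8 - 8 * ((K * K) * v) \<le> K * K + 2 * K + 1"
    using h3 unfolding hT by (simp add: algebra_simps)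
  have g2: "(K * K) * (K / 512) = (K * K * K) / 512" by simp
  have g1: "(K * K) * (2 * e) = 2 * ((K * K) * e)" by simp
  show False using f1 f2 f3 f4 f5 h3' g1 g2 KK K by linarith
qed

lemma expect_sum:
  fixes f :: "history \<Rightarrow> real"
  shows "measure_pmf.expectation (play A F n) f = (\<Sum>h\<in>set_pmf (play A F n). f h * pmf (play A F n) h)"
  by (rule integral_measure_pmf_real) (auto simp: finite_play)

lemma per_F:
  fixes F :: "history \<Rightarrow> real" and T :: nat and K :: real
  assumes F01: "\<And>h. 0 \<le> F h \<and> F h \<le> 1" and K: "128 \<le> K" and KT: "real T = K * K * K"
  shows "K / 512 \<le> expected_caldist (adv K) F T"
proof -
  define P where "P = play (adv K) F T"
  define S where "S = set_pmf P"
  define w where "w = pmf P"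
  define CD where "CD = (\<lambda>h::history. CalDist T (\<lambda>t. fst (h ! t)) (\<lambda>t. snd (h ! t)))"
  define a where "a = (\<lambda>h. of_bool (act K h T) :: real)"
  have fS: "finite S" by (simp add: S_def P_def finite_play)
  have w0: "\<And>h. 0 \<le> w h" by (simp add: w_def)
  have w1: "(\<Sum>h\<in>S. w h) = 1" unfolding w_def S_def by (rule sum_pmf_eq_1) (auto simp: fS[unfolded S_def])
  have E: "\<And>f. measure_pmf.expectation P f = (\<Sum>h\<in>S. f h * w h)"
    unfolding P_def S_def w_def by (rule expect_sum)
  have good: "goodh K h T \<and> length h = T" if hS: "h \<in> S" for h
  proof -
    have sup: "length h = T \<and> (\<forall>i<T. snd (h!i) = F (take i h)) \<and>
     (\<forall>i<T. fst (h!i) \<longrightarrow> adv K (take i h) \<noteq> 0) \<and> (\<forall>i<T. \<not> fst (h!i) \<longrightarrow> adv K (take i h) \<noteq> 1)"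
      by (rule play_support[OF adv01]) (use hS in \<open>simp add: S_def P_def\<close>)
    have Sk: "Ssum (take i h) j = Ssum h j" if "j \<le> i" "i \<le> length h" for i j
      unfolding Ssum_def using that by (intro sum.cong refl) (auto simp: xv_def pv_def)
    have advk: "adv K (take i h) = (if act K h i then 1/2 else if 0 < Ssum h i then 1 else 0)"
      if "i \<le> length h" for i
    proof -
      have l: "length (take i h) = i" using that by simp
      have "act K (take i h) i = act K h i" unfolding act_def using Sk that by auto
      moreover have "Ssum (take i h) i = Ssum h i" using Sk that by simp
      ultimately show ?thesis unfolding adv_def l by simp
    qed
    show ?thesis
    proof (intro conjI)
      show "length h = T" using sup by simp
      show "goodh K h T"
      proof
        show "0 < K" using K by simp
      next
        fix i assume "i < T"
        then show "0 \<le> pv h i \<and> pv h i \<le> 1" using sup F01 by (simp add: pv_def)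
      next
        fix i assume i: "i < T" and na: "\<not> act K h i"
        have ad: "adv K (take i h) = (if 0 < Ssum h i then 1 else 0)"
          using advk[of i] i na sup by simp
        show "(0 < Ssum h i \<longrightarrow> xv h i = 1) \<and> (\<not> 0 < Ssum h i \<longrightarrow> xv h i = 0)"
          using sup i ad by (auto simp: xv_def)
      qed
    qed
  qed
  have p1: "K * (1 - a h) \<le> CD h" and p2: "Vs K h T + Ns K h T \<le> 2 * CD h"
    and p3: "real T * a h / 8 - 8 * (K * K) * Vs K h T \<le> Rs K h T"
    and p4: "(Ust K h T)^2 \<le> (K + 1) * (K + 1)"
    if hS: "h \<in> S" for h
  proof -
    interpret goodh K h T using good[OF hS] by simp
    have CS: "\<bar>Ssum h T\<bar> \<le> CD h"
      unfolding CD_def using caldist_ge_S[where T=T and x="\<lambda>t. fst (h ! t)" and p="\<lambda>t. snd (h ! t)"]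
      by (simp add: Ssum_def xv_def pv_def)
    have CZ: "(2/3) * (\<Sum>s<T. (1/2 - pv h s) * (xv h s - pv h s)) \<le> CD h"
      unfolding CD_def using caldist_ge_Z[where T=T and x="\<lambda>t. fst (h ! t)" and p="\<lambda>t. snd (h ! t)"] hp
      by (simp add: xv_def pv_def)
    show "K * (1 - a h) \<le> CD h"
    proof (cases "act K h T")
      case True then show ?thesis using CS by (simp add: a_def)
    next
      case False then show ?thesis using CS stop_S by (simp add: a_def)
    qed
    show "Vs K h T + Ns K h T \<le> 2 * CD h" using Z_ge Inact_le CS CZ by linarith
    show "real T * a h / 8 - 8 * (K * K) * Vs K h T \<le> Rs K h T"
      using R_ge by (simp add: a_def power2_eq_square)
    have "\<bar>Ust K h T\<bar> \<le> K + 1" by (rule Ust_bound) simp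
    then have "\<bar>Ust K h T\<bar> * \<bar>Ust K h T\<bar> \<le> (K + 1) * (K + 1)"
      by (intro mult_mono) auto
    then show "(Ust K h T)^2 \<le> (K + 1) * (K + 1)" by (simp add: power2_eq_square)
  qed
  define e where "e = (\<Sum>h\<in>S. CD h * w h)"
  define \<alpha> where "\<alpha> = (\<Sum>h\<in>S. a h * w h)"
  define v where "v = (\<Sum>h\<in>S. Vs K h T * w h)"
  have eE: "expected_caldist (adv K) F T = e"
    unfolding expected_caldist_def e_def using E[of CD] by (simp add: P_def CD_def)
  have N0: "(\<Sum>h\<in>S. Ns K h T * w h) = 0"
  proof -
    have "(\<Sum>h\<in>S. Ns K h T * w h) = (\<Sum>h\<in>S. Ns K h (length h) * w h)"
      by (intro sum.cong refl) (use good in auto)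
    also have "\<dots> = 0" using mart_N[of K F T] E by (simp add: P_def)
    finally show ?thesis .
  qed
  have UR0: "(\<Sum>h\<in>S. ((Ust K h T)^2 - Rs K h T) * w h) = 0"
  proof -
    have "(\<Sum>h\<in>S. ((Ust K h T)^2 - Rs K h T) * w h) =
          (\<Sum>h\<in>S. ((Ust K h (length h))^2 - Rs K h (length h)) * w h)"
      by (intro sum.cong refl) (use good in auto)
    also have "\<dots> = 0" using mart_UR[of K F T] E by (simp add: P_def)
    finally show ?thesis .
  qed
  have s1: "K * (1 - \<alpha>) \<le> e"
  proof -
    have "K * (1 - \<alpha>) = (\<Sum>h\<in>S. K * (1 - a h) * w h)"
    proof -
      have k: "(\<Sum>h\<in>S. K * w h) = K" using w1 by (simp add: sum_distrib_left[symmetric])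
      show ?thesis unfolding \<alpha>_def using k by (simp add: algebra_simps sum_distrib_left sum_subtractf)
    qed
    also have "\<dots> \<le> e" unfolding e_def
      by (intro sum_mono mult_right_mono p1 w0)
    finally show ?thesis .
  qed
  have s2: "v \<le> 2 * e"
  proof -
    have "v = (\<Sum>h\<in>S. (Vs K h T + Ns K h T) * w h)"
      unfolding v_def using N0 by (simp add: algebra_simps sum.distrib)
    also have "\<dots> \<le> (\<Sum>h\<in>S. (2 * CD h) * w h)"
      by (intro sum_mono mult_right_mono p2 w0)
    also have "\<dots> = 2 * e" unfolding e_def by (simp add: sum_distrib_left mult.assoc)
    finally show ?thesis .
  qed
  have s3: "real T * \<alpha> / 8 - 8 * (K * K) * v \<le> (K + 1) * (K + 1)"
  proof -
    have "real T * \<alpha> / 8 - 8 * (K * K) * v = (\<Sum>h\<in>S. (real T * a h / 8 - 8 * (K * K) * Vs K h T) * w h)"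
      unfolding \<alpha>_def v_def
      by (simp add: algebra_simps sum_distrib_left sum_subtractf sum_divide_distrib)
    also have "\<dots> \<le> (\<Sum>h\<in>S. Rs K h T * w h)"
      by (intro sum_mono mult_right_mono p3 w0)
    also have "\<dots> = (\<Sum>h\<in>S. (Ust K h T)^2 * w h)"
      using UR0 by (simp add: algebra_simps sum_subtractf)
    also have "\<dots> \<le> (\<Sum>h\<in>S. ((K + 1) * (K + 1)) * w h)"
      by (intro sum_mono mult_right_mono p4 w0)
    also have "\<dots> = (K + 1) * (K + 1)" using w1 by (simp add: sum_distrib_left[symmetric])
    finally show ?thesis .
  qed
  have "K / 512 \<le> e" by (rule final_arith[OF K s1 s2 s3 KT])
  then show ?thesis using eE by simp
qed



theorem theorem4:
  shows "\<exists>c>0. \<exists>T0::nat. \<forall>T\<ge>T0. \<exists>A :: history \<Rightarrow> real.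
     (\<forall>h. 0 \<le> A h \<and> A h \<le> 1) \<and>
     (\<forall>(M :: real measure) (F :: real \<Rightarrow> history \<Rightarrow> real).
        prob_space M \<and> (\<forall>\<omega> h. 0 \<le> F \<omega> h \<and> F \<omega> h \<le> 1) \<longrightarrow>
        (\<integral>\<^sup>+ \<omega>. ennreal (expected_caldist A (F \<omega>) T) \<partial>M)
          \<ge> ennreal (c * real T powr (1/3)))"
proof (rule exI[of _ "1/512"], intro conjI)
  show "(0::real) < 1/512" by simp
  show "\<exists>T0::nat. \<forall>T\<ge>T0. \<exists>A :: history \<Rightarrow> real.
     (\<forall>h. 0 \<le> A h \<and> A h \<le> 1) \<and>
     (\<forall>(M :: real measure) (F :: real \<Rightarrow> history \<Rightarrow> real).
        prob_space M \<and> (\<forall>\<omega> h. 0 \<le> F \<omega> h \<and> F \<omega> h \<le> 1) \<longrightarrow>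
        (\<integral>\<^sup>+ \<omega>. ennreal (expected_caldist A (F \<omega>) T) \<partial>M)
          \<ge> ennreal (1/512 * real T powr (1/3)))"
  proof (intro exI[of _ "2097152::nat"] allI impI)
    fix T :: nat assume T: "2097152 \<le> T"
    define K where "K = real T powr (1/3)"
    have Tpos: "0 < real T" using T by simp
    have KT: "real T = K * K * K"
    proof -
      have "K * K * K = real T powr (1/3 + 1/3 + 1/3)"
        unfolding K_def by (simp only: powr_add)
      also have "\<dots> = real T" using Tpos by simp
      finally show ?thesis by simp
    qed
    have K0: "0 \<le> K" unfolding K_def by simp
    have K: "128 \<le> K"
    proof (rule ccontr)
      assume "\<not> 128 \<le> K"
      then have "K < 128" by simp
      then have "K ^ 3 < 128 ^ 3" using K0 by (intro power_strict_mono) auto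
      then have "real T < 2097152" using KT by (simp add: power3_eq_cube)
      then show False using T by simp
    qed
    show "\<exists>A :: history \<Rightarrow> real.
     (\<forall>h. 0 \<le> A h \<and> A h \<le> 1) \<and>
     (\<forall>(M :: real measure) (F :: real \<Rightarrow> history \<Rightarrow> real).
        prob_space M \<and> (\<forall>\<omega> h. 0 \<le> F \<omega> h \<and> F \<omega> h \<le> 1) \<longrightarrow>
        (\<integral>\<^sup>+ \<omega>. ennreal (expected_caldist A (F \<omega>) T) \<partial>M)
          \<ge> ennreal (1/512 * real T powr (1/3)))"
    proof (intro exI[of _ "adv K"] conjI allI impI)
      fix h show "0 \<le> adv K h" using adv01[of K h] by simp
    next
      fix h show "adv K h \<le> 1" using adv01[of K h] by simp
    next
      fix M :: "real measure" and F :: "real \<Rightarrow> history \<Rightarrow> real"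
      assume H: "prob_space M \<and> (\<forall>\<omega> h. 0 \<le> F \<omega> h \<and> F \<omega> h \<le> 1)"
      have pw: "K / 512 \<le> expected_caldist (adv K) (F \<omega>) T" for \<omega>
        by (rule per_F[OF _ K KT]) (use H in auto)
      have "ennreal (1/512 * real T powr (1/3)) = (\<integral>\<^sup>+\<omega>. ennreal (K / 512) \<partial>M)"
        using H prob_space.emeasure_space_1[of M] by (simp add: K_def nn_integral_const)
      also have "\<dots> \<le> (\<integral>\<^sup>+\<omega>. ennreal (expected_caldist (adv K) (F \<omega>) T) \<partial>M)"
        by (intro nn_integral_mono ennreal_leI pw)
      finally show "(\<integral>\<^sup>+\<omega>. ennreal (expected_caldist (adv K) (F \<omega>) T) \<partial>M)
          \<ge> ennreal (1/512 * real T powr (1/3))" by simp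
    qed
  qed
qed

end
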